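(* Let $n, m \geq 0$ be integers of the same parity. Then $a(n) <_4 a(m)$ if and only if $t(m) < t(n)$, and $a(n) \leq_4 a(m)$ if and only if $t(m) \leq t(n)$.
   Context: The Thue–Morse sequence $(t(n))_{n\geq 0}$ is defined by $t(0)=0$, $t(2n)=t(n)$, $t(2n+1)=1-t(n)$. $(a(n))_{n\geq0}$ is the increasing sequence (indexed from $0$, $a(0)=1$) of odious numbers, i.e. nonnegative integers whose sum of binary digits is odd. For integers $x, y$, let $\bar x, \bar y \in \{0,1,2,3\}$ be their residues modulo $4$; write $x <_4 y$ if $\bar x < \bar y$ and $x \leq_4 y$ if $\bar x \leq \bar y$ (and $x >_4 y$, $x \geq_4 y$ mean $y <_4 x$, $y \leq_4 x$). *)

theory Defs
  imports Main "HOL-Library.Infinite_Set"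
begin

fun thue_morse :: "nat \<Rightarrow> nat" where
  "thue_morse n = (if n = 0 then 0
     else if even n then thue_morse (n div 2) else 1 - thue_morse (n div 2))"

fun bin_digit_sum :: "nat \<Rightarrow> nat" where
  "bin_digit_sum n = (if n = 0 then 0 else n mod 2 + bin_digit_sum (n div 2))"

definition odious :: "nat \<Rightarrow> bool" where
  "odious k \<longleftrightarrow> odd (bin_digit_sum k)"

(* a(n): n-th odious number in increasing order, indexed from 0 *)
definition odious_seq :: "nat \<Rightarrow> nat" where
  "odious_seq n = enumerate {k. odious k} n"

definition lt4 :: "nat \<Rightarrow> nat \<Rightarrow> bool" where
  "lt4 x y \<longleftrightarrow> x mod 4 < y mod 4"

definition le4 :: "nat \<Rightarrow> nat \<Rightarrow> bool" where
  "le4 x y \<longleftrightarrow> x mod 4 \<le> y mod 4"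

end

theory Submission
  imports Defs
begin

declare thue_morse.simps[simp del] bin_digit_sum.simps[simp del]

lemma tm0[simp]: "thue_morse 0 = 0" by (simp add: thue_morse.simps)
lemma tmS: "n \<noteq> 0 \<Longrightarrow> thue_morse n = (if even n then thue_morse (n div 2) else 1 - thue_morse (n div 2))"
  by (subst thue_morse.simps) simp
lemma bds0[simp]: "bin_digit_sum 0 = 0" by (simp add: bin_digit_sum.simps)
lemma bdsS: "n \<noteq> 0 \<Longrightarrow> bin_digit_sum n = n mod 2 + bin_digit_sum (n div 2)"
  by (subst bin_digit_sum.simps) simp

lemma tm_le1: "thue_morse n \<le> 1"
  by (induction n rule: thue_morse.induct) (metis tm0 tmS diff_le_self zero_le_one)

lemma tm_bds: "thue_morse n = bin_digit_sum n mod 2"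
proof (induction n rule: thue_morse.induct)
  case (1 n)
  show ?case
  proof (cases "n = 0")
    case True then show ?thesis by simp
  next
    case False
    have "bin_digit_sum n = n mod 2 + bin_digit_sum (n div 2)" using False by (rule bdsS)
    moreover have "thue_morse n = (if even n then thue_morse (n div 2) else 1 - thue_morse (n div 2))"
      using False by (rule tmS)
    ultimately show ?thesis using 1 False tm_le1[of "n div 2"]
      by (cases "even n") (auto simp: mod2_eq_if split: if_splits)
  qed
qed

lemma tm_even: "thue_morse (2*k) = thue_morse k"
  by (cases "k = 0") (auto simp: tmS)

lemma tm_odd: "thue_morse (2*k+1) = 1 - thue_morse k"
  by (simp add: tmS)

lemma odious_tm: "odious k \<longleftrightarrow> thue_morse k = 1"
  unfolding odious_def tm_bds by presburger

definition f :: "nat \<Rightarrow> nat" where "f n = 2*n + 1 - thue_morse n"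

lemma f_odious: "odious (f n)"
proof (cases "thue_morse n = 0")
  case True
  then have "f n = 2*n+1" by (simp add: f_def)
  then show ?thesis using tm_odd[of n] True by (simp add: odious_tm)
next
  case False
  then have "thue_morse n = 1" using tm_le1[of n] by simp
  then have "f n = 2*n" by (simp add: f_def)
  then show ?thesis using tm_even[of n] \<open>thue_morse n = 1\<close> by (simp add: odious_tm)
qed

lemma odious_f: "odious s \<Longrightarrow> s = f (s div 2)"
proof -
  assume o: "odious s"
  define k where "k = s div 2"
  have tk: "thue_morse k \<le> 1" by (rule tm_le1)
  show ?thesis
  proof (cases "even s")
    case True
    then have s: "s = 2*k" unfolding k_def by simp
    then have "thue_morse k = 1" using o tm_even[of k] by (simp add: odious_tm)
    then show ?thesis using s by (simp add: f_def k_def[symmetric])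
  next
    case False
    then have s: "s = 2*k+1" unfolding k_def by simp
    then have "thue_morse k = 0" using o tm_odd[of k] tk by (simp add: odious_tm)
    then show ?thesis using s by (simp add: f_def k_def[symmetric])
  qed
qed

lemma f_step: "f n < f (Suc n)"
  using tm_le1[of n] tm_le1[of "Suc n"] by (simp add: f_def)

lemma f_smono: "strict_mono f"
  using f_step by (simp add: strict_mono_Suc_iff)

lemma inf_S: "infinite {k. odious k}"
proof
  assume "finite {k. odious k}"
  then have "finite (range f)" by (rule finite_subset[rotated]) (auto intro: f_odious)
  moreover have "inj f" using f_smono by (rule strict_mono_imp_inj_on)
  ultimately show False using finite_imageD by blast
qed

lemma odious_seq_f: "odious_seq n = f n"
proof (induction n)
  case 0
  have "(LEAST s. odious s) = 1"
  proof (rule Least_equality)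
    show "odious 1" using bdsS[of 1] by (simp add: odious_def)
    fix y assume "odious y" then show "1 \<le> y"
      by (cases y) (auto simp: odious_def)
  qed
  moreover have "f 0 = 1" by (simp add: f_def)
  ultimately show ?case by (simp add: odious_seq_def enumerate_0)
next
  case (Suc n)
  have "odious_seq (Suc n) = (LEAST s. s \<in> {k. odious k} \<and> f n < s)"
    unfolding odious_seq_def using enumerate_Suc''[OF inf_S, of n] Suc
    by (simp add: odious_seq_def)
  also have "\<dots> = f (Suc n)"
  proof (rule Least_equality)
    show "f (Suc n) \<in> {k. odious k} \<and> f n < f (Suc n)" using f_odious f_step by simp
    fix y assume y: "y \<in> {k. odious k} \<and> f n < y"
    then have yf: "y = f (y div 2)" using odious_f by simp
    then have "n < y div 2" using y f_smono by (metis strict_mono_less not_less_iff_gr_or_eq)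
    then have "Suc n \<le> y div 2" by simp
    then have "f (Suc n) \<le> f (y div 2)" using f_smono by (simp add: strict_mono_less_eq)
    then show "f (Suc n) \<le> y" using yf by simp
  qed
  finally show ?case .
qed

theorem lemma2:
  fixes n m :: nat
  assumes "even n \<longleftrightarrow> even m"
  shows "(lt4 (odious_seq n) (odious_seq m) \<longleftrightarrow> thue_morse m < thue_morse n)
       \<and> (le4 (odious_seq n) (odious_seq m) \<longleftrightarrow> thue_morse m \<le> thue_morse n)"
proof -
  have key: "f x mod 4 = (if even x then 1 - thue_morse x else 3 - thue_morse x)" for x
  proof -
    have t: "thue_morse x = 0 \<or> thue_morse x = 1" using tm_le1[of x] by linarith
    show ?thesis
    proof (cases "even x")
      case True
      then obtain k where "x = 2*k" by blast
      then show ?thesis using t unfolding f_def by (elim disjE) (simp; presburger)+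
    next
      case False
      then obtain k where "x = 2*k+1" using oddE by blast
      then show ?thesis using t unfolding f_def by (elim disjE) (simp; presburger)+
    qed
  qed
  have t: "thue_morse n = 0 \<or> thue_morse n = 1" "thue_morse m = 0 \<or> thue_morse m = 1"
    using tm_le1[of n] tm_le1[of m] by linarith+
  show ?thesis
    unfolding odious_seq_f lt4_def le4_def key
    using assms t by (cases "even n") (auto simp del: One_nat_def)
qed

end
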